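(* Let $b:\mathbb R\to\mathbb R$ be an arbitrary function (bottom topography), and let $x$ be a grid function with $x_s\neq0$ and $x_t+\check x_t\neq0$ at every node, satisfying at every node the modified scheme $$x_{t\check t}-\alpha^2x_{s\bar s}+\Big(\frac{1}{\hat x_s\check x_s}\Big)_{\bar s}-\frac{b_t+\check b_t}{x_t+\check x_t}=0,$$ where $b$ also denotes the grid function $b(x(t,s))$, so that $b_t+\check b_t=\big(b(\hat x)-b(\check x)\big)/\tau$. Then at every node the discrete energy conservation law $$\Big(x_t^2+x_s^{-1}+\hat x_s^{-1}+\alpha^2x_s\hat x_s-\hat b-b\Big)_{\check t}+\Big((x_t^++\check x_t^+)\big((\hat x_s\check x_s)^{-1}-\alpha^2x_s\big)\Big)_{\bar s}=0$$ holds.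
   Context: Fix mesh steps $\tau>0$, $h>0$ and a constant $\alpha\in\mathbb R$. A grid function is a real-valued function $f=f(t,s)$ on the uniform orthogonal mesh $\{(n\tau,kh): n,k\in\mathbb Z\}$. Shifts: $\hat f=f(t+\tau,s)$, $\check f=f(t-\tau,s)$, $f^+=f_+=f(t,s+h)$, $f^-=f_-=f(t,s-h)$; a shift applied to a composite expression shifts the whole expression (e.g. $\hat x_s$ is $x_s$ evaluated at $(t+\tau,s)$, $\check x_t$ is $x_t$ evaluated at $(t-\tau,s)$, $x_t^+$ is $x_t$ evaluated at $(t,s+h)$, $\check x_t^+$ is $x_t$ evaluated at $(t-\tau,s+h)$, $\hat b=b(\hat x)$). Differences: $f_t=(\hat f-f)/\tau$, $f_{\check t}=(f-\check f)/\tau$, $f_s=(f_+-f)/h$, $f_{\bar s}=(f-f_-)/h$; iterated differences compose, e.g. $x_{t\check t}=(x_t)_{\check t}=(\hat x-2x+\check x)/\tau^2$ and $x_{s\bar s}=(x_s)_{\bar s}=(x_+-2x+x_-)/h^2$. *)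

theory Defs
  imports Main Complex_Main
begin

text \<open>Grid functions on the mesh (n tau, k h), n,k integers, represented as
  functions of the integer indices (n,k).\<close>
type_synonym gridfun = "int \<Rightarrow> int \<Rightarrow> real"

definition dt :: "real \<Rightarrow> gridfun \<Rightarrow> gridfun" where
  "dt \<tau> f = (\<lambda>n k. (f (n+1) k - f n k) / \<tau>)"
definition dtb :: "real \<Rightarrow> gridfun \<Rightarrow> gridfun" where
  "dtb \<tau> f = (\<lambda>n k. (f n k - f (n-1) k) / \<tau>)"
definition ds :: "real \<Rightarrow> gridfun \<Rightarrow> gridfun" where
  "ds h f = (\<lambda>n k. (f n (k+1) - f n k) / h)"
definition dsb :: "real \<Rightarrow> gridfun \<Rightarrow> gridfun" where
  "dsb h f = (\<lambda>n k. (f n k - f n (k-1)) / h)"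

end

theory Submission
  imports Defs
begin

lemma alg0:
  fixes u v S S' P Q iP iQ iS G G' Ap Bp Bz Bm \<tau> h \<alpha> :: real
  assumes "u + v \<noteq> 0" "\<tau> \<noteq> 0" "h \<noteq> 0"
    and "Ap = (u+v) + h*(P-Q)/\<tau>" "(P-Q)*G = iQ - iP"
  shows "((u^2 + iS + iP + \<alpha>^2*S*P - Bp - Bz) - (v^2 + iQ + iS + \<alpha>^2*Q*S - Bz - Bm))/\<tau>
     + (Ap * (G - \<alpha>^2*S) - (u+v) * (G' - \<alpha>^2*S'))/h
   = (u+v) * ((u-v)/\<tau> - \<alpha>^2*((S-S')/h) + (G - G')/h - ((Bp - Bm)/\<tau>)/(u+v))"
proof -
  let ?D = "u+v"
  have s1: "Ap * (G - \<alpha>^2*S)/h = ?D*(G - \<alpha>^2*S)/h + ((P-Q)*G - \<alpha>^2*S*(P-Q))/\<tau>"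
    unfolding assms(4) using assms(2,3) by (simp add: field_simps)
  have s2: "(Ap * (G - \<alpha>^2*S) - ?D * (G' - \<alpha>^2*S'))/h
      = ?D*(G - \<alpha>^2*S)/h - ?D * (G' - \<alpha>^2*S')/h + ((iQ - iP) - \<alpha>^2*S*(P-Q))/\<tau>"
    using s1 assms(5) by (simp add: diff_divide_distrib)
  have s3: "?D * ((u-v)/\<tau> - \<alpha>^2*((S-S')/h) + (G - G')/h - ((Bp - Bm)/\<tau>)/?D)
      = ?D * ((u-v)/\<tau> - \<alpha>^2*((S-S')/h) + (G - G')/h) - (Bp - Bm)/\<tau>"
  proof -
    have g: "\<And>A X. ?D*(A - X/?D) = ?D*A - X" using assms(1) by (simp add: right_diff_distrib)
    show ?thesis by (rule g)
  qed
  show ?thesis unfolding s2 s3 using assms(2,3)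
    by (simp add: field_simps power2_eq_square)
qed

lemma alg:
  fixes u v S S' P Q P' Q' Ap Bp Bz Bm \<tau> h \<alpha> :: real
  assumes "u + v \<noteq> 0" "P \<noteq> 0" "Q \<noteq> 0" "\<tau> \<noteq> 0" "h \<noteq> 0"
    and "Ap = (u+v) + h*(P-Q)/\<tau>"
  shows "((u^2 + 1/S + 1/P + \<alpha>^2*S*P - Bp - Bz) - (v^2 + 1/Q + 1/S + \<alpha>^2*Q*S - Bz - Bm))/\<tau>
     + (Ap * (1/(P*Q) - \<alpha>^2*S) - (u+v) * (1/(P'*Q') - \<alpha>^2*S'))/h
   = (u+v) * ((u-v)/\<tau> - \<alpha>^2*((S-S')/h) + (1/(P*Q) - 1/(P'*Q'))/h - ((Bp - Bm)/\<tau>)/(u+v))"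
proof -
  have "(P-Q)*(1/(P*Q)) = 1/Q - 1/P" using assms by (simp add: field_simps)
  from alg0[OF assms(1,4,5,6) this] show ?thesis .
qed

theorem mainTheorem9:
  fixes \<tau> h \<alpha> :: real and b :: "real \<Rightarrow> real" and x :: gridfun
  assumes "\<tau> > 0" and "h > 0"
    and "\<And>n k. ds h x n k \<noteq> 0"
    and "\<And>n k. dt \<tau> x n k + dt \<tau> x (n-1) k \<noteq> 0"
    and "\<And>n k. dtb \<tau> (dt \<tau> x) n k - \<alpha>^2 * dsb h (ds h x) n k
              + dsb h (\<lambda>n k. 1 / (ds h x (n+1) k * ds h x (n-1) k)) n k
              - (dt \<tau> (\<lambda>n k. b (x n k)) n k + dt \<tau> (\<lambda>n k. b (x n k)) (n-1) k)
                / (dt \<tau> x n k + dt \<tau> x (n-1) k) = 0"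
  shows "\<And>n k. dtb \<tau> (\<lambda>n k. (dt \<tau> x n k)^2 + 1 / ds h x n k + 1 / ds h x (n+1) k
                 + \<alpha>^2 * ds h x n k * ds h x (n+1) k - b (x (n+1) k) - b (x n k)) n k
         + dsb h (\<lambda>n k. (dt \<tau> x n (k+1) + dt \<tau> x (n-1) (k+1))
                 * (1 / (ds h x (n+1) k * ds h x (n-1) k) - \<alpha>^2 * ds h x n k)) n k = 0"
proof -
  fix n k
  have t: "\<tau> \<noteq> 0" and hh: "h \<noteq> 0" using assms by auto
  define u where "u = dt \<tau> x n k"
  define v where "v = dt \<tau> x (n-1) k"
  define S where "S = ds h x n k"
  define S' where "S' = ds h x n (k-1)"
  define P where "P = ds h x (n+1) k"
  define Q where "Q = ds h x (n-1) k"
  define P' where "P' = ds h x (n+1) (k-1)"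
  define Q' where "Q' = ds h x (n-1) (k-1)"
  define Ap where "Ap = dt \<tau> x n (k+1) + dt \<tau> x (n-1) (k+1)"
  define Am where "Am = dt \<tau> x n (k-1) + dt \<tau> x (n-1) (k-1)"
  have hAp: "Ap = (u+v) + h*(P-Q)/\<tau>"
    unfolding Ap_def u_def v_def P_def Q_def dt_def ds_def using t hh
    by (simp add: field_simps)
  have hAm: "Am = (u+v) - h*(P'-Q')/\<tau>"
    unfolding Am_def u_def v_def P'_def Q'_def dt_def ds_def using t hh
    by (simp add: field_simps)
  have E: "dtb \<tau> (\<lambda>n k. (dt \<tau> x n k)^2 + 1 / ds h x n k + 1 / ds h x (n+1) k
                 + \<alpha>^2 * ds h x n k * ds h x (n+1) k - b (x (n+1) k) - b (x n k)) n k
     = ((u^2 + 1/S + 1/P + \<alpha>^2*S*P - b (x (n+1) k) - b (x n k))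
        - (v^2 + 1/Q + 1/S + \<alpha>^2*Q*S - b (x n k) - b (x (n-1) k)))/\<tau>"
    unfolding dtb_def u_def v_def S_def P_def Q_def by simp
  have F: "dsb h (\<lambda>n k. (dt \<tau> x n (k+1) + dt \<tau> x (n-1) (k+1))
                 * (1 / (ds h x (n+1) k * ds h x (n-1) k) - \<alpha>^2 * ds h x n k)) n k
     = (Ap * (1/(P*Q) - \<alpha>^2*S) - (u+v) * (1/(P'*Q') - \<alpha>^2*S'))/h"
    unfolding dsb_def Ap_def u_def v_def S_def P_def Q_def S'_def P'_def Q'_def by simp
  have Sc: "dtb \<tau> (dt \<tau> x) n k - \<alpha>^2 * dsb h (ds h x) n k
              + dsb h (\<lambda>n k. 1 / (ds h x (n+1) k * ds h x (n-1) k)) n k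
              - (dt \<tau> (\<lambda>n k. b (x n k)) n k + dt \<tau> (\<lambda>n k. b (x n k)) (n-1) k)
                / (dt \<tau> x n k + dt \<tau> x (n-1) k)
     = (u-v)/\<tau> - \<alpha>^2*((S-S')/h) + (1/(P*Q) - 1/(P'*Q'))/h - ((b (x (n+1) k) - b (x (n-1) k))/\<tau>)/(u+v)"
    unfolding dsb_def dtb_def u_def v_def S_def P_def Q_def S'_def P'_def Q'_def
    by (simp add: dt_def diff_divide_distrib add_divide_distrib[symmetric])
  have nz: "u+v \<noteq> 0" "P \<noteq> 0" "Q \<noteq> 0" "P' \<noteq> 0" "Q' \<noteq> 0"
    using assms(3,4) unfolding u_def v_def P_def Q_def P'_def Q'_def by auto
  show "?thesis n k"
    unfolding E F using alg[OF nz(1,2,3) t hh hAp, where S=S and S'=S' and P'=P' and Q'=Q' and \<alpha>=\<alpha> and Bp="b (x (n+1) k)" and Bz="b (x n k)" and Bm="b (x (n-1) k)"]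
      Sc assms(5)[of n k] by simp
qed

end
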